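(* Let $n=3$, let $a_{11},a_{22},a_{33}\ge0$, and let $a_{13}=a_{21}=a_{32}=1$ and $a_{12}=a_{23}=a_{31}=0$. Then there exist $\pi_1,\pi_2,\pi_3>0$ such that $$\kappa:=\min_{i=1,2,3}\Big(8\pi_ia_{ii}-\sum_{j=1,\,j\ne i}^3\pi_ja_{ji}\Big)>0$$ if and only if $a_{11}a_{22}a_{33}>8^{-3}$. *)

theory Defs
  imports Complex_Main
begin

end

theory Submission
  imports Defs
begin

theorem lemma15:
  fixes a :: "nat \<Rightarrow> nat \<Rightarrow> real"
  assumes "a 1 1 \<ge> 0" and "a 2 2 \<ge> 0" and "a 3 3 \<ge> 0"
    and "a 1 3 = 1" and "a 2 1 = 1" and "a 3 2 = 1"
    and "a 1 2 = 0" and "a 2 3 = 0" and "a 3 1 = 0"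
  shows "(\<exists>\<pi> :: nat \<Rightarrow> real. (\<forall>i\<in>{1,2,3}. \<pi> i > 0) \<and>
            Min ((\<lambda>i. 8 * \<pi> i * a i i - (\<Sum>j\<in>{1,2,3} - {i}. \<pi> j * a j i)) ` {1,2,3}) > 0)
         \<longleftrightarrow> a 1 1 * a 2 2 * a 3 3 > 8 powi (-3)"
proof -
  have e: "\<And>\<pi>::nat\<Rightarrow>real. (Min ((\<lambda>i. 8 * \<pi> i * a i i - (\<Sum>j\<in>{1,2,3} - {i}. \<pi> j * a j i)) ` {1,2,3}) > 0)
     \<longleftrightarrow> (8 * \<pi> 1 * a 1 1 > \<pi> 2 \<and> 8 * \<pi> 2 * a 2 2 > \<pi> 3 \<and> 8 * \<pi> 3 * a 3 3 > \<pi> 1)"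
  proof -
    fix \<pi> :: "nat \<Rightarrow> real"
    have s1: "{1,2,3} - {1::nat} = {2,3}" and s2: "{1,2,3} - {2::nat} = {1,3}" and s3: "{1,2,3} - {3::nat} = {1,2}" by auto
    show "?thesis \<pi>" using assms by (simp add: insert_Diff_if)
  qed
  have p: "(8::real) powi (-3) = 1/512" by (simp add: power_int_minus)
  define x where "x = a 1 1"
  define y where "y = a 2 2"
  define z where "z = a 3 3"
  have x0: "x \<ge> 0" "y \<ge> 0" "z \<ge> 0" using assms by (auto simp: x_def y_def z_def)
  have "(\<exists>\<pi> :: nat \<Rightarrow> real. (\<forall>i\<in>{1,2,3}. \<pi> i > 0) \<and>
          8 * \<pi> 1 * x > \<pi> 2 \<and> 8 * \<pi> 2 * y > \<pi> 3 \<and> 8 * \<pi> 3 * z > \<pi> 1) \<longleftrightarrow> x*y*z > 1/512"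
  proof
    assume "\<exists>\<pi> :: nat \<Rightarrow> real. (\<forall>i\<in>{1,2,3}. \<pi> i > 0) \<and>
          8 * \<pi> 1 * x > \<pi> 2 \<and> 8 * \<pi> 2 * y > \<pi> 3 \<and> 8 * \<pi> 3 * z > \<pi> 1"
    then obtain \<pi> :: "nat \<Rightarrow> real" where h: "\<pi> 1 > 0" "\<pi> 2 > 0" "\<pi> 3 > 0"
      "8 * \<pi> 1 * x > \<pi> 2" "8 * \<pi> 2 * y > \<pi> 3" "8 * \<pi> 3 * z > \<pi> 1" by auto
    have pos: "0 < 8 * \<pi> 1 * x" "0 < 8 * \<pi> 2 * y" "0 < 8 * \<pi> 3 * z" using h by linarith+
    have "(8 * \<pi> 1 * x) * (8 * \<pi> 2 * y) > \<pi> 2 * \<pi> 3"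
      using h pos by (intro mult_strict_mono) auto
    moreover have "(8 * \<pi> 1 * x) * (8 * \<pi> 2 * y) * (8 * \<pi> 3 * z) > \<pi> 2 * \<pi> 3 * \<pi> 1"
      using mult_strict_mono[OF calculation h(6) mult_pos_pos[OF pos(1) pos(2)]] h(1) by simp
    hence "(x*y*z*512) * (\<pi> 1 * \<pi> 2 * \<pi> 3) > 1 * (\<pi> 1 * \<pi> 2 * \<pi> 3)"
      by (simp add: algebra_simps)
    moreover have pp: "0 < \<pi> 1 * \<pi> 2 * \<pi> 3" using h by simp
    ultimately have "x*y*z*512 > 1" by (simp only: mult_less_cancel_right_pos[OF pp])
    thus "x*y*z > 1/512" by simp
  next
    assume P: "x*y*z > 1/512"
    define P where "P = 512*x*y*z"
    have P1: "P > 1" using P by (simp add: P_def)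
    define q where "q = sqrt (sqrt P)"
    have q1: "q > 1" using P1 by (simp add: q_def)
    have qq: "q^2 = sqrt P" using P1 by (simp add: q_def)
    have sP: "sqrt P > 1" using P1 by simp
    have "sqrt P * 1 < sqrt P * sqrt P" using sP by (intro mult_strict_left_mono) auto
    hence qP: "q^2 < P" using P1 unfolding qq by simp
    have "x \<noteq> 0" "y \<noteq> 0" "z \<noteq> 0" using P1 unfolding P_def by auto
    hence xyz: "x > 0" "y > 0" "z > 0" using x0 by auto
    define \<pi> :: "nat \<Rightarrow> real" where "\<pi> = (\<lambda>i. if i = 1 then 1 else if i = 2 then 8*x/q else 64*x*y/q^2)"
    have "\<pi> 1 > 0" "\<pi> 2 > 0" "\<pi> 3 > 0" using xyz q1 by (auto simp: \<pi>_def)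
    moreover have "8 * \<pi> 1 * x > \<pi> 2" using xyz q1 by (simp add: \<pi>_def divide_less_eq)
    moreover have "8 * \<pi> 2 * y > \<pi> 3" using xyz q1 by (simp add: \<pi>_def divide_less_eq power2_eq_square field_simps)
    moreover have "8 * \<pi> 3 * z > \<pi> 1" using xyz q1 qP by (simp add: \<pi>_def P_def field_simps)
    ultimately show "\<exists>\<pi> :: nat \<Rightarrow> real. (\<forall>i\<in>{1,2,3}. \<pi> i > 0) \<and>
          8 * \<pi> 1 * x > \<pi> 2 \<and> 8 * \<pi> 2 * y > \<pi> 3 \<and> 8 * \<pi> 3 * z > \<pi> 1" by (intro exI[of _ \<pi>]) auto
  qed
  thus ?thesis unfolding e p x_def y_def z_def by simp
qed

end
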